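(* Let $\mathtt{a}\in\Sigma$. For every $k\in\mathbb{N}$ there exist $p,q\in\mathbb{N}$ with $p\neq q$ such that $\mathtt{a}^p \equiv_k \mathtt{a}^q$.
   Context: $\Sigma$ is a fixed finite alphabet. For $w \in \Sigma^*$, $\mathsf{Facs}(w)$ is the set of all factors (contiguous subwords, including $\varepsilon$ and $w$) of $w$. The structure $\mathfrak{A}_w$ representing $w$ has universe $\mathsf{Facs}(w)\cup\{\perp\}$, a ternary relation $R_\circ=\{(x,y,z)\in\mathsf{Facs}(w)^3 : x=y\cdot z\}$, for each letter $\mathtt{a}\in\Sigma$ a constant interpreted as $\mathtt{a}$ if $\mathtt{a}$ occurs in $w$ and as $\perp$ otherwise, and a constant $\varepsilon$ interpreted as the empty word. The $k$-round Ehrenfeucht–Fraïssé game on $\mathfrak{A}_w,\mathfrak{A}_v$: in each round $i$, Spoiler picks one of the two structures and an element of its universe, Duplicator answers with an element of the other structure's universe; let $a_i$ (in $\mathfrak{A}_w$) and $b_i$ (in $\mathfrak{A}_v$) be the chosen elements. Duplicator wins if the tuples $(a_1,\dots,a_k,\vec c^{\,\mathfrak{A}_w})$ and $(b_1,\dots,b_k,\vec c^{\,\mathfrak{A}_v})$, where $\vec c$ lists the interpretations of all constants, form a partial isomorphism: for all indices $i,j,l$, $a_i$ equals the interpretation of a constant $c$ iff $b_i$ equals the interpretation of $c$; $a_i=a_j$ iff $b_i=b_j$; and $a_i=a_j\cdot a_l$ iff $b_i=b_j\cdot b_l$. We write $w\equiv_k v$ if Duplicator has a winning strategy in the $k$-round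 game. *)

theory Defs
  imports Main
begin

text \<open>The alphabet Sigma is the (finite) type 'a. Words are lists over 'a.
Elements of the structure A_w are encoded as 'a list option: Some u is the
factor u, None is the extra element bot.\<close>

definition facs :: "'a list \<Rightarrow> 'a list set" where
  "facs w = {u. \<exists>x y. w = x @ u @ y}"

definition univ :: "'a list \<Rightarrow> 'a list option set" where
  "univ w = Some ` facs w \<union> {None}"

text \<open>Constants: Some c is the letter constant c, None is the constant epsilon.\<close>
definition cinterp :: "'a list \<Rightarrow> 'a option \<Rightarrow> 'a list option" where
  "cinterp w c = (case c of
      None \<Rightarrow> Some []
    | Some a \<Rightarrow> (if a \<in> set w then Some [a] else None))"

definition ext_tuple :: "'a list \<Rightarrow> 'a list option list \<Rightarrow> nat + 'a option \<Rightarrow> 'a list option" where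
  "ext_tuple w as i = (case i of Inl n \<Rightarrow> as ! n | Inr c \<Rightarrow> cinterp w c)"

definition idx :: "nat \<Rightarrow> (nat + 'a option) set" where
  "idx n = Inl ` {..<n} \<union> range Inr"

definition Rcat :: "'a list option \<Rightarrow> 'a list option \<Rightarrow> 'a list option \<Rightarrow> bool" where
  "Rcat x y z = (\<exists>x' y' z'. x = Some x' \<and> y = Some y' \<and> z = Some z' \<and> x' = y' @ z')"

definition partial_iso :: "'a list \<Rightarrow> 'a list \<Rightarrow> 'a list option list \<Rightarrow> 'a list option list \<Rightarrow> bool" where
  "partial_iso w v as bs \<longleftrightarrow> length as = length bs \<and>
     (\<forall>i\<in>idx (length as). \<forall>j\<in>idx (length as).
        ext_tuple w as i = ext_tuple w as j \<longleftrightarrow> ext_tuple v bs i = ext_tuple v bs j) \<and>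
     (\<forall>i\<in>idx (length as). \<forall>j\<in>idx (length as). \<forall>l\<in>idx (length as).
        Rcat (ext_tuple w as i) (ext_tuple w as j) (ext_tuple w as l) \<longleftrightarrow>
        Rcat (ext_tuple v bs i) (ext_tuple v bs j) (ext_tuple v bs l))"

fun dup_wins :: "nat \<Rightarrow> 'a list \<Rightarrow> 'a list \<Rightarrow> 'a list option list \<Rightarrow> 'a list option list \<Rightarrow> bool" where
  "dup_wins 0 w v as bs = partial_iso w v as bs"
| "dup_wins (Suc k) w v as bs =
     ((\<forall>x\<in>univ w. \<exists>y\<in>univ v. dup_wins k w v (as @ [x]) (bs @ [y])) \<and>
      (\<forall>y\<in>univ v. \<exists>x\<in>univ w. dup_wins k w v (as @ [x]) (bs @ [y])))"

definition ef_equiv :: "nat \<Rightarrow> 'a list \<Rightarrow> 'a list \<Rightarrow> bool" where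
  "ef_equiv k w v = dup_wins k w v [] []"

end

theory Submission
  imports Defs "HOL-Library.FSet"
begin

datatype 'b tp = Atom 'b | Node "'b tp fset"

definition atp :: "'a list \<Rightarrow> 'a list option list \<Rightarrow>
   ((nat + 'a option) \<times> (nat + 'a option) \<times> (nat + 'a option) \<times> bool \<times> bool) set" where
  "atp w as = {(i,j,l,e,r). i \<in> idx (length as) \<and> j \<in> idx (length as) \<and> l \<in> idx (length as) \<and>
      e = (ext_tuple w as i = ext_tuple w as j) \<and>
      r = Rcat (ext_tuple w as i) (ext_tuple w as j) (ext_tuple w as l)}"

fun tpf :: "nat \<Rightarrow> 'a list \<Rightarrow> 'a list option list \<Rightarrow> (nat \<times> ((nat + 'a option) \<times> (nat + 'a option) \<times> (nat + 'a option) \<times> bool \<times> bool) set) tp" where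
  "tpf 0 w as = Atom (length as, atp w as)"
| "tpf (Suc k) w as = Node (Abs_fset ((\<lambda>x. tpf k w (as @ [x])) ` univ w))"

lemma finite_facs: "finite (facs w)"
proof -
  have "facs w \<subseteq> {u. set u \<subseteq> set w \<and> length u \<le> length w}"
    unfolding facs_def by auto
  moreover have "finite {u. set u \<subseteq> set w \<and> length u \<le> length w}"
    using finite_lists_length_le[of "set w" "length w"] by simp
  ultimately show ?thesis by (rule finite_subset)
qed

lemma finite_univ: "finite (univ w)"
  unfolding Defs.univ_def using finite_imageI[OF finite_facs[of w], of Some] by simp

lemma finite_idx: "finite (idx n :: (nat + 'a::finite option) set)"
  unfolding idx_def by simp

lemma sound: "tpf k w as = tpf k v bs \<Longrightarrow> dup_wins k w v as bs"
proof (induction k arbitrary: as bs)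
  case 0
  then have len: "length as = length bs" and A: "atp w as = atp v bs" by auto
  have key: "\<And>i j l. i \<in> idx (length as) \<Longrightarrow> j \<in> idx (length as) \<Longrightarrow> l \<in> idx (length as) \<Longrightarrow>
      (ext_tuple w as i = ext_tuple w as j) = (ext_tuple v bs i = ext_tuple v bs j) \<and>
      Rcat (ext_tuple w as i) (ext_tuple w as j) (ext_tuple w as l) =
      Rcat (ext_tuple v bs i) (ext_tuple v bs j) (ext_tuple v bs l)"
  proof -
    fix i j l :: "nat + 'a option" assume h: "i \<in> idx (length as)" "j \<in> idx (length as)" "l \<in> idx (length as)"
    have "(i,j,l,ext_tuple w as i = ext_tuple w as j,
           Rcat (ext_tuple w as i) (ext_tuple w as j) (ext_tuple w as l)) \<in> atp w as"
      using h unfolding atp_def by simp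
    then have "(i,j,l,ext_tuple w as i = ext_tuple w as j,
           Rcat (ext_tuple w as i) (ext_tuple w as j) (ext_tuple w as l)) \<in> atp v bs"
      using A by simp
    then show "(ext_tuple w as i = ext_tuple w as j) = (ext_tuple v bs i = ext_tuple v bs j) \<and>
      Rcat (ext_tuple w as i) (ext_tuple w as j) (ext_tuple w as l) =
      Rcat (ext_tuple v bs i) (ext_tuple v bs j) (ext_tuple v bs l)"
      unfolding atp_def by simp
  qed
  show ?case unfolding dup_wins.simps partial_iso_def using len key by blast
next
  case (Suc k)
  have fw: "finite ((\<lambda>x. tpf k w (as @ [x])) ` univ w)" using finite_univ[of w] by (rule finite_imageI)
  have fv: "finite ((\<lambda>y. tpf k v (bs @ [y])) ` univ v)" using finite_univ[of v] by (rule finite_imageI)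
  from Suc.prems have "Abs_fset ((\<lambda>x. tpf k w (as @ [x])) ` univ w) =
      Abs_fset ((\<lambda>y. tpf k v (bs @ [y])) ` univ v)" by simp
  then have E: "(\<lambda>x. tpf k w (as @ [x])) ` univ w = (\<lambda>y. tpf k v (bs @ [y])) ` univ v"
    using fw fv by (simp add: Abs_fset_inject)
  show ?case
  proof (simp only: dup_wins.simps, intro conjI ballI)
    fix x assume "x \<in> univ w"
    then have "tpf k w (as @ [x]) \<in> (\<lambda>y. tpf k v (bs @ [y])) ` univ v" using E by blast
    then obtain y where "y \<in> univ v" "tpf k w (as @ [x]) = tpf k v (bs @ [y])" by auto
    then show "\<exists>y\<in>univ v. dup_wins k w v (as @ [x]) (bs @ [y])" using Suc.IH by blast
  next
    fix y assume "y \<in> univ v"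
    then have "tpf k v (bs @ [y]) \<in> (\<lambda>x. tpf k w (as @ [x])) ` univ w" using E by blast
    then obtain x where "x \<in> univ w" "tpf k v (bs @ [y]) = tpf k w (as @ [x])" by auto
    then show "\<exists>x\<in>univ w. dup_wins k w v (as @ [x]) (bs @ [y])" using Suc.IH by metis
  qed
qed

fun TT :: "nat \<Rightarrow> nat \<Rightarrow> (nat \<times> ((nat + 'a::finite option) \<times> (nat + 'a option) \<times> (nat + 'a option) \<times> bool \<times> bool) set) tp set" where
  "TT 0 n = Atom ` ({n} \<times> Pow (idx n \<times> idx n \<times> idx n \<times> UNIV \<times> UNIV))"
| "TT (Suc k) n = Node ` {X. fset X \<subseteq> TT k (Suc n)}"

lemma finite_fsets: "finite A \<Longrightarrow> finite {X. fset X \<subseteq> A}"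
proof -
  assume "finite A"
  have "inj_on fset {X. fset X \<subseteq> A}" by (simp add: inj_on_def fset_inject)
  moreover have "fset ` {X. fset X \<subseteq> A} \<subseteq> Pow A" by auto
  ultimately show ?thesis using \<open>finite A\<close>
    by (metis finite_Pow_iff finite_imageD finite_subset)
qed

lemma finite_TT: "finite (TT k n)"
proof (induction k arbitrary: n)
  case 0
  have "finite (idx n :: (nat + 'a option) set)" by (rule finite_idx)
  then show ?case by (simp add: finite_cartesian_product)
next
  case (Suc k)
  then show ?case using finite_fsets[OF Suc.IH[of "Suc n"]] by (simp add: finite_imageI)
qed

lemma tpf_in: "tpf k w as \<in> TT k (length as)" for w :: "'a::finite list"
proof (induction k arbitrary: as)
  case 0
  show ?case by (auto simp: atp_def)
next
  case (Suc k)
  have fw: "finite ((\<lambda>x. tpf k w (as @ [x])) ` univ w)" using finite_univ[of w] by (rule finite_imageI)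
  have "fset (Abs_fset ((\<lambda>x. tpf k w (as @ [x])) ` univ w)) \<subseteq> TT k (Suc (length as))"
    using fw Suc.IH[of "as @ [_]"] by (auto simp: Abs_fset_inverse)
  then show ?case by simp
qed

theorem lemma3p4:
  fixes a :: "'a::finite"
  shows "\<forall>k::nat. \<exists>p q::nat. p \<noteq> q \<and> ef_equiv k (replicate p a) (replicate q a)"
proof
  fix k :: nat
  let ?f = "\<lambda>p. tpf k (replicate p a) []"
  have "range ?f \<subseteq> TT k 0" using tpf_in[of k _ "[]"] by auto
  then have "finite (range ?f)" using finite_TT finite_subset by blast
  then have "\<not> inj ?f" using finite_imageD infinite_UNIV_nat by blast
  then obtain p q where "p \<noteq> q" "?f p = ?f q" unfolding inj_def by blast
  then show "\<exists>p q::nat. p \<noteq> q \<and> ef_equiv k (replicate p a) (replicate q a)"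
    unfolding ef_equiv_def using sound by blast
qed

end
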